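(* In the multi-parameter setting described in the context, for every Kraus representation $\{E_k(\theta)\}$ of the channel and every POVM $\{M_m\}$, $F_M(\theta)\le C_E(\theta)$ as $m\times m$ real symmetric matrices.
   Context: A multi-parameter quantum channel on density matrices on $\mathbb{C}^d$ is $\rho_0\mapsto\sum_kE_k(\theta)\rho_0E_k(\theta)^\dagger$ with $\theta=(\theta^1,\dots,\theta^m)\in\mathbb{R}^m$, Kraus operators differentiable, $\sum_kE_k^\dagger E_k=I$. The input is a fixed pure state $\rho_0=|\psi_0\rangle\langle\psi_0|$ with output $\rho_{out}(\theta)$. Write $X^{(j)}=\partial X/\partial\theta^j$. $C_E(\theta)_{jk}=4\sum_l\mathrm{Re}\,\mathrm{tr}\{E_l^{(j)}\rho_0E_l^{(k)\dagger}\}$. For a POVM $\{M_m\}$ (Hermitian, nonnegative, summing to $I$) with $p(m;\theta)=\mathrm{tr}\{\rho_{out}(\theta)M_m\}$, the Fisher information matrix is $F_M(\theta)_{jk}=\sum_m p(m;\theta)^{-1}\frac{\partial p(m;\theta)}{\partial\theta^j}\frac{\partial p(m;\theta)}{\partial\theta^k}$. *)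

theory Defs
  imports "HOL-Analysis.Analysis"
begin

text \<open>Complex d x d matrices are represented as complex^'d^'d (d = CARD('d)),
parameter vectors theta as real^'p (m = CARD('p)).\<close>

definition adj :: "complex^'d^'d \<Rightarrow> complex^'d^'d" where
  "adj A = (\<chi> i j. cnj (A $ j $ i))"

definition mtrace :: "complex^'d^'d \<Rightarrow> complex" where
  "mtrace A = (\<Sum>i\<in>UNIV. A $ i $ i)"

definition hermitian :: "complex^'d^'d \<Rightarrow> bool" where
  "hermitian A \<longleftrightarrow> adj A = A"

definition nonneg_op :: "complex^'d^'d \<Rightarrow> bool" where
  "nonneg_op A \<longleftrightarrow> hermitian A \<and>
     (\<forall>v::complex^'d. 0 \<le> Re (\<Sum>i\<in>UNIV. cnj (v $ i) * (A *v v) $ i))"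

definition ket_bra :: "complex^'d \<Rightarrow> complex^'d^'d" where
  "ket_bra \<psi> = (\<chi> i j. \<psi> $ i * cnj (\<psi> $ j))"

definition pderiv_j :: "(real^'p \<Rightarrow> 'b::real_normed_vector) \<Rightarrow> real^'p \<Rightarrow> 'p \<Rightarrow> 'b" where
  "pderiv_j f \<theta> j = frechet_derivative f (at \<theta>) (axis j 1)"

definition rho_out :: "'k set \<Rightarrow> ('k \<Rightarrow> real^'p \<Rightarrow> complex^'d^'d) \<Rightarrow> complex^'d^'d
     \<Rightarrow> real^'p \<Rightarrow> complex^'d^'d" where
  "rho_out K E \<rho>0 \<theta> = (\<Sum>k\<in>K. E k \<theta> ** \<rho>0 ** adj (E k \<theta>))"

definition prob_out :: "'k set \<Rightarrow> ('k \<Rightarrow> real^'p \<Rightarrow> complex^'d^'d) \<Rightarrow> complex^'d^'d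
     \<Rightarrow> complex^'d^'d \<Rightarrow> real^'p \<Rightarrow> real" where
  "prob_out K E \<rho>0 Mm \<theta> = Re (mtrace (rho_out K E \<rho>0 \<theta> ** Mm))"

text \<open>Fisher information matrix F_M(theta). (Outcomes with p = 0 contribute 0,
  since inverse 0 = 0 in Isabelle.)\<close>
definition fisher :: "'k set \<Rightarrow> ('k \<Rightarrow> real^'p \<Rightarrow> complex^'d^'d) \<Rightarrow> complex^'d^'d
     \<Rightarrow> 'o set \<Rightarrow> ('o \<Rightarrow> complex^'d^'d) \<Rightarrow> real^'p \<Rightarrow> real^'p^'p" where
  "fisher K E \<rho>0 \<Omega> M \<theta> = (\<chi> j k. \<Sum>m\<in>\<Omega>.
      inverse (prob_out K E \<rho>0 (M m) \<theta>)
      * pderiv_j (prob_out K E \<rho>0 (M m)) \<theta> j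
      * pderiv_j (prob_out K E \<rho>0 (M m)) \<theta> k)"

definition C_E :: "'k set \<Rightarrow> ('k \<Rightarrow> real^'p \<Rightarrow> complex^'d^'d) \<Rightarrow> complex^'d^'d
     \<Rightarrow> real^'p \<Rightarrow> real^'p^'p" where
  "C_E K E \<rho>0 \<theta> = (\<chi> j k. 4 * (\<Sum>l\<in>K.
      Re (mtrace (pderiv_j (E l) \<theta> j ** \<rho>0 ** adj (pderiv_j (E l) \<theta> k)))))"

definition loewner_le :: "real^'p^'p \<Rightarrow> real^'p^'p \<Rightarrow> bool" where
  "loewner_le A B \<longleftrightarrow> (\<forall>x::real^'p. 0 \<le> x \<bullet> ((B - A) *v x))"

end

theory Submission imports Defs begin
definition qf :: "complex^'d^'d \<Rightarrow> complex^'d \<Rightarrow> complex^'d \<Rightarrow> complex" where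
  "qf M u v = (\<Sum>i\<in>UNIV. cnj (u $ i) * (M *v v) $ i)"

lemma qf_expand: "qf M u v = (\<Sum>i\<in>UNIV. \<Sum>j\<in>UNIV. cnj (u $ i) * M $ i $ j * v $ j)"
  by (simp add: qf_def matrix_vector_mult_def sum_distrib_left mult.assoc)

lemma trace_lemma:
  "mtrace (A ** ket_bra \<psi> ** adj B ** M) = qf M (B *v \<psi>) (A *v \<psi>)"
proof -
  have "mtrace (A ** ket_bra \<psi> ** adj B ** M) =
    (\<Sum>i\<in>UNIV. \<Sum>l\<in>UNIV. \<Sum>k\<in>UNIV. \<Sum>j\<in>UNIV. A$i$j * \<psi>$j * cnj (\<psi>$k) * cnj (B$l$k) * M$l$i)"
    by (simp add: mtrace_def matrix_matrix_mult_def ket_bra_def adj_def sum_distrib_left sum_distrib_right mult.assoc)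
  also have "\<dots> = (\<Sum>l\<in>UNIV. \<Sum>i\<in>UNIV. \<Sum>k\<in>UNIV. \<Sum>j\<in>UNIV. A$i$j * \<psi>$j * cnj (\<psi>$k) * cnj (B$l$k) * M$l$i)"
    by (rule sum.swap)
  also have "\<dots> = (\<Sum>l\<in>UNIV. \<Sum>i\<in>UNIV. \<Sum>j\<in>UNIV. \<Sum>k\<in>UNIV. A$i$j * \<psi>$j * cnj (\<psi>$k) * cnj (B$l$k) * M$l$i)"
    by (rule sum.cong[OF refl], rule sum.cong[OF refl], rule sum.swap)
  also have "\<dots> = qf M (B *v \<psi>) (A *v \<psi>)"
    unfolding qf_expand matrix_vector_mult_def
    by (simp add: sum_distrib_left sum_distrib_right cnj_sum mult.assoc mult.left_commute; intro sum.cong refl; simp add: algebra_simps)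
  finally show ?thesis .
qed

lemma qf_add_left: "qf M (u + v) w = qf M u w + qf M v w"
  by (simp add: qf_def sum.distrib distrib_right)
lemma qf_add_right: "qf M u (v + w) = qf M u v + qf M u w"
  by (simp add: qf_def matrix_vector_right_distrib sum.distrib distrib_left)
lemma qf_scaleR_left: "qf M ((r::real) *\<^sub>R u) v = of_real r * qf M u v"
  unfolding qf_def vector_scaleR_component by (simp add: sum_distrib_left scaleR_conv_of_real mult.assoc)
lemma qf_scaleR_right: "qf M u ((r::real) *\<^sub>R v) = of_real r * qf M u v"
  unfolding qf_expand vector_scaleR_component by (simp add: sum_distrib_left scaleR_conv_of_real mult.assoc mult.left_commute)
lemma qf_sumM: "finite S \<Longrightarrow> qf (sum M S) u v = (\<Sum>s\<in>S. qf (M s) u v)"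
  by (induct S rule: finite_induct) (simp_all add: qf_expand sum.distrib distrib_left distrib_right)

lemma bilinear_qf: "bilinear (qf M)"
  unfolding bilinear_def
  by (auto intro!: linearI simp: qf_add_left qf_add_right qf_scaleR_left qf_scaleR_right simp del: scaleR_conv_of_real) (simp_all add: scaleR_conv_of_real)

lemma qf_deriv:
  assumes "(a has_derivative a') (at \<theta>)"
  shows "((\<lambda>t. Re (qf M (a t) (a t))) has_derivative
          (\<lambda>x. Re (qf M (a \<theta>) (a' x)) + Re (qf M (a' x) (a \<theta>)))) (at \<theta>)"
proof -
  have bb: "bounded_bilinear (qf M)"
    using bilinear_qf bilinear_conv_bounded_bilinear by blast
  have "((\<lambda>t. qf M (a t) (a t)) has_derivative (\<lambda>x. qf M (a \<theta>) (a' x) + qf M (a' x) (a \<theta>))) (at \<theta>)"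
    by (rule bounded_bilinear.FDERIV[OF bb assms assms])
  from has_derivative_Re[OF this] show ?thesis by simp
qed

lemma dir_deriv:
  fixes f :: "real^'p \<Rightarrow> 'b::real_normed_vector"
  assumes "f differentiable (at \<theta>)"
  shows "(\<Sum>j\<in>UNIV. x$j *\<^sub>R pderiv_j f \<theta> j) = frechet_derivative f (at \<theta>) x"
proof -
  let ?D = "frechet_derivative f (at \<theta>)"
  have lin: "linear ?D"
    using assms frechet_derivative_works has_derivative_linear by blast
  have x: "x = (\<Sum>j\<in>UNIV. x$j *\<^sub>R axis j (1::real))"
    using basis_expansion[of x] by (simp add: scalar_mult_eq_scaleR)
  have "?D x = (\<Sum>j\<in>UNIV. x$j *\<^sub>R ?D (axis j 1))"
    by (subst x) (simp add: linear_sum[OF lin] linear_scale[OF lin] o_def)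
  then show ?thesis by (simp add: pderiv_j_def)
qed

lemma discr:
  fixes p D Q :: real
  assumes "\<And>t. 0 \<le> p + t * D + t^2 * Q" "0 \<le> Q"
  shows "D^2 \<le> 4 * p * Q"
proof (cases "Q = 0")
  case True
  have "D = 0"
  proof (rule ccontr)
    assume "D \<noteq> 0"
    have "0 \<le> p + (-(\<bar>p\<bar> + 1) / D) * D" using assms(1)[of "-(\<bar>p\<bar> + 1) / D"] True by simp
    moreover have "(-(\<bar>p\<bar> + 1) / D) * D = -(\<bar>p\<bar> + 1)" using \<open>D \<noteq> 0\<close> by simp
    ultimately show False by linarith
  qed
  then show ?thesis using True by simp
next
  case False
  hence Q: "Q > 0" using assms(2) by simp
  have "0 \<le> p + (-D/(2*Q)) * D + (-D/(2*Q))^2 * Q" by (rule assms(1))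
  also have "\<dots> = p - D^2 / (4*Q)" using Q by (simp add: field_simps power2_eq_square)
  finally have "D^2/(4*Q) \<le> p" by simp
  thus ?thesis using Q by (simp add: field_simps)
qed

lemma qf_zero_left[simp]: "qf M 0 v = 0" by (simp add: qf_def)
lemma qf_zero_right[simp]: "qf M u 0 = 0" by (simp add: qf_def)
lemma qf_sum_left: "finite S \<Longrightarrow> qf M (sum f S) v = (\<Sum>s\<in>S. qf M (f s) v)"
  by (induct S rule: finite_induct) (simp_all add: qf_add_left)
lemma qf_sum_right: "finite S \<Longrightarrow> qf M u (sum f S) = (\<Sum>s\<in>S. qf M u (f s))"
  by (induct S rule: finite_induct) (simp_all add: qf_add_right)

lemma matrix_add_rdistrib': "((A + B) ** C) = (A ** C) + (B ** (C::'a::semiring_1^'n^'n))"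
  by (vector matrix_matrix_mult_def sum.distrib[symmetric] field_simps)
lemma matmul_sum_left: "finite S \<Longrightarrow> (sum f S) ** (B::'a::semiring_1^'n^'n) = (\<Sum>s\<in>S. f s ** B)"
  by (induct S rule: finite_induct) (simp_all add: matrix_add_rdistrib')

lemma mtrace_sum: "finite S \<Longrightarrow> mtrace (sum f S) = (\<Sum>s\<in>S. mtrace (f s))"
  by (induct S rule: finite_induct) (simp_all add: mtrace_def sum.distrib)

lemma mv_scaleR: "((r::real) *\<^sub>R A) *v (v::complex^'d) = r *\<^sub>R (A *v v)"
  by (simp add: vec_eq_iff matrix_vector_mult_def scaleR_sum_right)

lemma mv_sum: "finite S \<Longrightarrow> (sum f S) *v (v::complex^'d) = (\<Sum>s\<in>S. f s *v v)"
  by (induct S rule: finite_induct) (simp_all add: matrix_vector_mult_add_rdistrib)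

lemma bl_mv: "bounded_linear (\<lambda>A::complex^'d^'d. A *v v)"
proof -
  have "linear (\<lambda>A::complex^'d^'d. A *v v)"
    by (rule linearI) (simp_all add: matrix_vector_mult_add_rdistrib mv_scaleR)
  thus ?thesis using linear_conv_bounded_linear by blast
qed

lemma prob_out_eq:
  assumes "finite K"
  shows "prob_out K E (ket_bra \<psi>) Mm = (\<lambda>t. \<Sum>k\<in>K. Re (qf Mm (E k t *v \<psi>) (E k t *v \<psi>)))"
proof
  fix t
  show "prob_out K E (ket_bra \<psi>) Mm t = (\<Sum>k\<in>K. Re (qf Mm (E k t *v \<psi>) (E k t *v \<psi>)))"
    unfolding prob_out_def rho_out_def
    by (simp add: matmul_sum_left[OF assms] mtrace_sum[OF assms] trace_lemma)
qed

lemma prob_out_deriv: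
  assumes "finite K" "\<forall>k\<in>K. E k differentiable (at \<theta>)"
  shows "(prob_out K E (ket_bra \<psi>) Mm has_derivative
     (\<lambda>x. \<Sum>k\<in>K. Re (qf Mm (E k \<theta> *v \<psi>) (frechet_derivative (E k) (at \<theta>) x *v \<psi>))
              + Re (qf Mm (frechet_derivative (E k) (at \<theta>) x *v \<psi>) (E k \<theta> *v \<psi>)))) (at \<theta>)"
  unfolding prob_out_eq[OF assms(1)]
proof (rule has_derivative_sum)
  fix k assume "k \<in> K"
  hence "(E k has_derivative frechet_derivative (E k) (at \<theta>)) (at \<theta>)"
    using assms(2) frechet_derivative_works by blast
  hence "((\<lambda>t. E k t *v \<psi>) has_derivative (\<lambda>x. frechet_derivative (E k) (at \<theta>) x *v \<psi>)) (at \<theta>)"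
    using bounded_linear.has_derivative[OF bl_mv] by blast
  thus "((\<lambda>t. Re (qf Mm (E k t *v \<psi>) (E k t *v \<psi>))) has_derivative
     (\<lambda>x. Re (qf Mm (E k \<theta> *v \<psi>) (frechet_derivative (E k) (at \<theta>) x *v \<psi>))
              + Re (qf Mm (frechet_derivative (E k) (at \<theta>) x *v \<psi>) (E k \<theta> *v \<psi>)))) (at \<theta>)"
    by (rule qf_deriv)
qed

lemma quad_form: "x \<bullet> ((A::real^'p^'p) *v x) = (\<Sum>j\<in>UNIV. \<Sum>k\<in>UNIV. x$j * A$j$k * x$k)"
  by (simp add: inner_vec_def matrix_vector_mult_def sum_distrib_left mult.assoc)


lemma per_outcome:
  fixes a b :: "'k \<Rightarrow> complex^'d"
  assumes "finite K" "nonneg_op Mm"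
  shows "inverse (\<Sum>k\<in>K. Re (qf Mm (a k) (a k)))
           * (\<Sum>k\<in>K. Re (qf Mm (a k) (b k)) + Re (qf Mm (b k) (a k)))^2
         \<le> 4 * (\<Sum>k\<in>K. Re (qf Mm (b k) (b k)))"
proof -
  define p where "p = (\<Sum>k\<in>K. Re (qf Mm (a k) (a k)))"
  define D where "D = (\<Sum>k\<in>K. Re (qf Mm (a k) (b k)) + Re (qf Mm (b k) (a k)))"
  define Q where "Q = (\<Sum>k\<in>K. Re (qf Mm (b k) (b k)))"
  have nn: "\<And>v. 0 \<le> Re (qf Mm v v)" using assms(2) by (simp add: nonneg_op_def qf_def)
  have Q0: "0 \<le> Q" unfolding Q_def by (rule sum_nonneg) (rule nn)
  have p0: "0 \<le> p" unfolding p_def by (rule sum_nonneg) (rule nn)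
  have "\<And>t. 0 \<le> p + t * D + t^2 * Q"
  proof -
    fix t :: real
    have "0 \<le> (\<Sum>k\<in>K. Re (qf Mm (a k + t *\<^sub>R b k) (a k + t *\<^sub>R b k)))"
      by (rule sum_nonneg) (rule nn)
    also have "\<dots> = p + t * D + t^2 * Q"
      unfolding p_def D_def Q_def
      by (simp add: qf_add_left qf_add_right qf_scaleR_left qf_scaleR_right sum.distrib
          sum_distrib_left power2_eq_square algebra_simps)
    finally show "0 \<le> p + t * D + t^2 * Q" .
  qed
  hence d: "D^2 \<le> 4 * p * Q" using discr Q0 by blast
  show ?thesis
  proof (cases "p = 0")
    case True thus ?thesis using Q0 unfolding p_def[symmetric] Q_def[symmetric] by simp
  next
    case False
    hence "p > 0" using p0 by simp
    hence "inverse p * D^2 \<le> 4 * Q" using d by (simp add: field_simps mult.commute)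
    thus ?thesis unfolding p_def D_def Q_def .
  qed
qed


lemma reorder3:
  fixes x :: "'p::finite \<Rightarrow> real"
  shows "(\<Sum>j\<in>UNIV. \<Sum>k\<in>UNIV. x j * (\<Sum>m\<in>\<Omega>. c m * d m j * d m k) * x k)
       = (\<Sum>m\<in>\<Omega>. c m * (\<Sum>j\<in>UNIV. x j * d m j) * (\<Sum>k\<in>UNIV. x k * d m k))"
proof -
  have "(\<Sum>j\<in>UNIV. \<Sum>k\<in>UNIV. x j * (\<Sum>m\<in>\<Omega>. c m * d m j * d m k) * x k)
      = (\<Sum>j\<in>UNIV. \<Sum>k\<in>UNIV. \<Sum>m\<in>\<Omega>. c m * (x j * d m j) * (x k * d m k))"
    by (simp add: sum_distrib_left sum_distrib_right algebra_simps)
  also have "\<dots> = (\<Sum>j\<in>UNIV. \<Sum>m\<in>\<Omega>. \<Sum>k\<in>UNIV. c m * (x j * d m j) * (x k * d m k))"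
    by (rule sum.cong[OF refl], rule sum.swap)
  also have "\<dots> = (\<Sum>m\<in>\<Omega>. \<Sum>j\<in>UNIV. \<Sum>k\<in>UNIV. c m * (x j * d m j) * (x k * d m k))"
    by (rule sum.swap)
  also have "\<dots> = (\<Sum>m\<in>\<Omega>. c m * (\<Sum>j\<in>UNIV. x j * d m j) * (\<Sum>k\<in>UNIV. x k * d m k))"
    by (simp add: sum_distrib_left sum_distrib_right algebra_simps)
  finally show ?thesis .
qed

lemma qf_lin_comb:
  fixes x :: "'p::finite \<Rightarrow> real"
  shows "Re (qf M (\<Sum>k\<in>UNIV. x k *\<^sub>R u k) (\<Sum>j\<in>UNIV. x j *\<^sub>R u j))
    = (\<Sum>j\<in>UNIV. \<Sum>k\<in>UNIV. x j * Re (qf M (u k) (u j)) * x k)"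
  by (simp add: qf_sum_left qf_sum_right qf_scaleR_left qf_scaleR_right sum_distrib_left algebra_simps)

theorem lemma14:
  fixes K :: "'k set" and E :: "'k \<Rightarrow> real^'p \<Rightarrow> complex^'d^'d"
    and \<psi> :: "complex^'d" and \<Omega> :: "'o set" and M :: "'o \<Rightarrow> complex^'d^'d"
    and \<theta> :: "real^'p"
  assumes "finite K"
    and "\<forall>k\<in>K. \<forall>t. E k differentiable (at t)"
    and "\<forall>t. (\<Sum>k\<in>K. adj (E k t) ** E k t) = mat 1"
    and "norm \<psi> = 1"
    and "finite \<Omega>"
    and "\<forall>m\<in>\<Omega>. nonneg_op (M m)"
    and "(\<Sum>m\<in>\<Omega>. M m) = mat 1"
  shows "loewner_le (fisher K E (ket_bra \<psi>) \<Omega> M \<theta>) (C_E K E (ket_bra \<psi>) \<theta>)"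
  unfolding loewner_le_def
proof
  fix x :: "real^'p"
  let ?\<rho> = "ket_bra \<psi>"
  define Ed where "Ed k = frechet_derivative (E k) (at \<theta>)" for k
  define a where "a k = E k \<theta> *v \<psi>" for k
  define b where "b k = Ed k x *v \<psi>" for k
  define p where "p m = (\<Sum>k\<in>K. Re (qf (M m) (a k) (a k)))" for m
  define D where "D m = (\<Sum>k\<in>K. Re (qf (M m) (a k) (b k)) + Re (qf (M m) (b k) (a k)))" for m
  have dE: "\<forall>k\<in>K. E k differentiable (at \<theta>)" using assms(2) by blast
  have pm: "prob_out K E ?\<rho> (M m) \<theta> = p m" for m
    by (simp add: prob_out_eq[OF assms(1)] p_def a_def)
  have dp: "(\<Sum>j\<in>UNIV. x$j * pderiv_j (prob_out K E ?\<rho> (M m)) \<theta> j) = D m" for m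
  proof -
    note hd = prob_out_deriv[OF assms(1) dE, of \<psi> "M m"]
    hence "prob_out K E ?\<rho> (M m) differentiable (at \<theta>)" unfolding differentiable_def by blast
    from dir_deriv[OF this, of x] have "(\<Sum>j\<in>UNIV. x$j * pderiv_j (prob_out K E ?\<rho> (M m)) \<theta> j)
       = frechet_derivative (prob_out K E ?\<rho> (M m)) (at \<theta>) x" by simp
    also have "\<dots> = D m" using frechet_derivative_at[OF hd, symmetric]
      by (simp add: D_def a_def b_def Ed_def add.commute)
    finally show ?thesis .
  qed
  have F: "x \<bullet> (fisher K E ?\<rho> \<Omega> M \<theta> *v x) = (\<Sum>m\<in>\<Omega>. inverse (p m) * (D m)^2)"
  proof -
    have "x \<bullet> (fisher K E ?\<rho> \<Omega> M \<theta> *v x) = (\<Sum>m\<in>\<Omega>. inverse (prob_out K E ?\<rho> (M m) \<theta>)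
       * (\<Sum>j\<in>UNIV. x$j * pderiv_j (prob_out K E ?\<rho> (M m)) \<theta> j)
       * (\<Sum>k\<in>UNIV. x$k * pderiv_j (prob_out K E ?\<rho> (M m)) \<theta> k))"
      unfolding quad_form fisher_def by (simp add: reorder3[where x="\<lambda>j. x$j"])
    thus ?thesis by (simp add: dp pm power2_eq_square mult.assoc)
  qed
  have Bsum: "(\<Sum>j\<in>UNIV. x$j *\<^sub>R (pderiv_j (E l) \<theta> j *v \<psi>)) = b l" if "l \<in> K" for l
  proof -
    have "(\<Sum>j\<in>UNIV. x$j *\<^sub>R (pderiv_j (E l) \<theta> j *v \<psi>)) = (\<Sum>j\<in>UNIV. x$j *\<^sub>R pderiv_j (E l) \<theta> j) *v \<psi>"
      by (simp add: mv_sum mv_scaleR)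
    also have "\<dots> = b l" using dir_deriv[of "E l" \<theta> x] dE that by (simp add: b_def Ed_def)
    finally show ?thesis .
  qed
  have C: "x \<bullet> (C_E K E ?\<rho> \<theta> *v x) = 4 * (\<Sum>l\<in>K. Re (qf (mat 1) (b l) (b l)))"
  proof -
    have "x \<bullet> (C_E K E ?\<rho> \<theta> *v x) = (\<Sum>j\<in>UNIV. \<Sum>k\<in>UNIV. x$j * (4 * (\<Sum>l\<in>K.
        Re (qf (mat 1) (pderiv_j (E l) \<theta> k *v \<psi>) (pderiv_j (E l) \<theta> j *v \<psi>)))) * x$k)"
    proof -
      have tl1: "\<And>A B. mtrace (A ** ket_bra \<psi> ** adj B) = qf (mat 1) (B *v \<psi>) (A *v \<psi>)"
        using trace_lemma[where M="mat 1"] by simp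
      show ?thesis unfolding quad_form C_E_def tl1 by simp
    qed
    also have "\<dots> = 4 * (\<Sum>l\<in>K. \<Sum>j\<in>UNIV. \<Sum>k\<in>UNIV. x$j *
        Re (qf (mat 1) (pderiv_j (E l) \<theta> k *v \<psi>) (pderiv_j (E l) \<theta> j *v \<psi>)) * x$k)"
    proof -
      have "(\<Sum>j\<in>UNIV. \<Sum>k\<in>UNIV. x$j * (4 * (\<Sum>l\<in>K.
        Re (qf (mat 1) (pderiv_j (E l) \<theta> k *v \<psi>) (pderiv_j (E l) \<theta> j *v \<psi>)))) * x$k)
        = 4 * (\<Sum>j\<in>UNIV. \<Sum>k\<in>UNIV. \<Sum>l\<in>K. x$j *
        Re (qf (mat 1) (pderiv_j (E l) \<theta> k *v \<psi>) (pderiv_j (E l) \<theta> j *v \<psi>)) * x$k)"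
        by (simp add: sum_distrib_left sum_distrib_right algebra_simps)
      also have "\<dots> = 4 * (\<Sum>j\<in>UNIV. \<Sum>l\<in>K. \<Sum>k\<in>UNIV. x$j *
        Re (qf (mat 1) (pderiv_j (E l) \<theta> k *v \<psi>) (pderiv_j (E l) \<theta> j *v \<psi>)) * x$k)"
        by (subst sum.cong[OF refl sum.swap]) simp
      also have "\<dots> = 4 * (\<Sum>l\<in>K. \<Sum>j\<in>UNIV. \<Sum>k\<in>UNIV. x$j *
        Re (qf (mat 1) (pderiv_j (E l) \<theta> k *v \<psi>) (pderiv_j (E l) \<theta> j *v \<psi>)) * x$k)"
        by (subst sum.swap) simp
      finally show ?thesis .
    qed
    also have "\<dots> = 4 * (\<Sum>l\<in>K. Re (qf (mat 1) (b l) (b l)))"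
    proof (intro arg_cong[where f="\<lambda>s. 4 * s"] sum.cong refl)
      fix l assume "l \<in> K"
      show "(\<Sum>j\<in>UNIV. \<Sum>k\<in>UNIV. x$j *
        Re (qf (mat 1) (pderiv_j (E l) \<theta> k *v \<psi>) (pderiv_j (E l) \<theta> j *v \<psi>)) * x$k)
        = Re (qf (mat 1) (b l) (b l))"
        using qf_lin_comb[where x="\<lambda>j. x$j" and M="mat 1" and u="\<lambda>j. pderiv_j (E l) \<theta> j *v \<psi>"]
          Bsum[OF \<open>l \<in> K\<close>] by simp
    qed
    finally show ?thesis .
  qed
  have "(\<Sum>m\<in>\<Omega>. inverse (p m) * (D m)^2) \<le> (\<Sum>m\<in>\<Omega>. 4 * (\<Sum>k\<in>K. Re (qf (M m) (b k) (b k))))"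
    unfolding p_def D_def
    by (rule sum_mono, rule per_outcome) (use assms(1,6) in auto)
  also have "\<dots> = 4 * (\<Sum>k\<in>K. Re (qf (mat 1) (b k) (b k)))"
  proof -
    have "(\<Sum>m\<in>\<Omega>. 4 * (\<Sum>k\<in>K. Re (qf (M m) (b k) (b k))))
        = 4 * (\<Sum>k\<in>K. \<Sum>m\<in>\<Omega>. Re (qf (M m) (b k) (b k)))"
      by (simp add: sum_distrib_left sum.swap[of _ \<Omega> K])
    also have "\<dots> = 4 * (\<Sum>k\<in>K. Re (qf (\<Sum>m\<in>\<Omega>. M m) (b k) (b k)))"
      by (simp add: qf_sumM[OF assms(5)])
    finally show ?thesis using assms(7) by simp
  qed
  finally have "x \<bullet> (fisher K E ?\<rho> \<Omega> M \<theta> *v x) \<le> x \<bullet> (C_E K E ?\<rho> \<theta> *v x)"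
    using F C by simp
  thus "0 \<le> x \<bullet> ((C_E K E ?\<rho> \<theta> - fisher K E ?\<rho> \<Omega> M \<theta>) *v x)"
    by (simp add: matrix_vector_mult_diff_rdistrib inner_diff_right)
qed

end
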